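(* The sets $\{3,4,7\}$, $\{3,6,7\}$, $\{4,5,8,9\}$, $\{4,7,8,11\}$, and $\{5,8,9,12,13\}$ lie both in $\mathcal L(C_6)$ and in $\mathcal L(C_2^5)$.
   Context: $C_n$ denotes a cyclic group of order $n$ and $C_2^r$ an elementary abelian $2$-group of rank $r$. For a subset $G_0$ of a finite abelian group $G$, a sequence over $G_0$ is an element of the free abelian monoid $\mathcal F(G_0)$ with basis $G_0$ (a finite unordered list of elements of $G_0$, repetitions allowed). $\mathcal B(G_0)$ is the monoid of zero-sum sequences over $G_0$ (including the empty sequence). An atom is a minimal zero-sum sequence, i.e. a nonempty zero-sum sequence that is not a product of two nonempty zero-sum sequences. For $B\in\mathcal B(G_0)$, $\mathsf L(B)=\{k\in\mathbb N_0: B \text{ is a product of } k \text{ atoms}\}$, and $\mathcal L(G_0)=\{\mathsf L(B):B\in\mathcal B(G_0)\}$; $\mathcal L(G)$ is the case $G_0=G$. *)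

theory Defs
  imports Main "HOL-Library.Multiset" "HOL-Library.Numeral_Type" "HOL-Library.Function_Algebras"
begin

text \<open>Sequences over a finite abelian group G (written additively, here G is a type
  of class ab_group_add) are finite multisets of group elements.\<close>

definition zero_sum :: "'a::ab_group_add multiset \<Rightarrow> bool" where
  "zero_sum S \<longleftrightarrow> sum_mset S = 0"

definition atom :: "'a::ab_group_add multiset \<Rightarrow> bool" where
  "atom A \<longleftrightarrow> A \<noteq> {#} \<and> zero_sum A \<and>
     (\<forall>U V. A = U + V \<and> zero_sum U \<and> zero_sum V \<longrightarrow> U = {#} \<or> V = {#})"

definition lengths :: "'a::ab_group_add multiset \<Rightarrow> nat set" where
  "lengths B = {size F | F. (\<forall>A \<in># F. atom A) \<and> sum_mset F = B}"

text \<open>System of sets of lengths of the whole group (G_0 = G, given as the type 'a).\<close>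
definition system_of_lengths :: "'a::ab_group_add itself \<Rightarrow> nat set set" where
  "system_of_lengths (_::'a itself) = {lengths B | B::'a multiset. zero_sum B}"

end

theory Submission
  imports Defs
begin

lemma atom_sub:
  assumes "atom A" "X \<subseteq># A" "X \<noteq> {#}" "zero_sum X" shows "X = A"
proof -
  have A: "A = X + (A - X)" using assms(2) by simp
  have "sum_mset A = sum_mset X + sum_mset (A - X)" by (subst A) simp
  hence "zero_sum (A - X)" using assms(1,4) by (simp add: atom_def zero_sum_def)
  hence "X = {#} \<or> A - X = {#}" using assms(1,4) A unfolding atom_def by blast
  thus ?thesis using assms(3) A by auto
qed

lemma atom_intro:
  assumes "A \<noteq> {#}" "zero_sum A" "\<And>X. X \<subseteq># A \<Longrightarrow> X \<noteq> {#} \<Longrightarrow> zero_sum X \<Longrightarrow> X = A"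
  shows "atom A"
  unfolding atom_def
proof (intro conjI assms(1,2) allI impI)
  fix U V assume h: "A = U + V \<and> zero_sum U \<and> zero_sum V"
  show "U = {#} \<or> V = {#}"
  proof (cases "U = {#}")
    case False
    hence "U = A" using assms(3)[of U] h by simp
    thus ?thesis using h by simp
  qed simp
qed

section \<open>C6\<close>

definition M6 :: "nat \<Rightarrow> nat \<Rightarrow> nat \<Rightarrow> 6 multiset" where
  "M6 i j k = replicate_mset i 1 + replicate_mset j 2 + replicate_mset k 5"

lemma count_M6: "count (M6 i j k) x = (if x = 1 then i else if x = 2 then j else if x = 5 then k else 0)"
  by (auto simp: M6_def)

lemma M6_eq: "M6 i j k = M6 i' j' k' \<longleftrightarrow> i = i' \<and> j = j' \<and> k = k'"
proof
  assume "M6 i j k = M6 i' j' k'"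
  hence "count (M6 i j k) x = count (M6 i' j' k') x" for x by simp
  from this[of 1] this[of 2] this[of 5] show "i = i' \<and> j = j' \<and> k = k'" by (simp_all add: count_M6)
qed simp

lemma M6_add: "M6 i j k + M6 i' j' k' = M6 (i+i') (j+j') (k+k')"
  by (rule multiset_eqI) (simp add: count_M6)

lemma M6_repeat: "repeat_mset c (M6 i j k) = M6 (c*i) (c*j) (c*k)"
  by (rule multiset_eqI) (simp add: count_M6)

lemma M6_empty: "M6 i j k = {#} \<longleftrightarrow> i = 0 \<and> j = 0 \<and> k = 0"
  using M6_eq[of i j k 0 0 0] by (simp add: M6_def)

lemma M6_size: "size (M6 i j k) = i + j + k" by (simp add: M6_def)

lemma M6_zs: "zero_sum (M6 i j k) \<longleftrightarrow> 6 dvd (i + 2*j + 5*k)"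
proof -
  have "(of_nat (i + 2*j + 5*k) :: 6) = sum_mset (M6 i j k)"
    by (simp add: M6_def algebra_simps)
  moreover have "(of_nat n::6) = 0 \<longleftrightarrow> 6 dvd n" for n by (simp add: of_nat_eq_0_iff_char_dvd)
  ultimately show ?thesis unfolding zero_sum_def by metis
qed

lemma M6_sub:
  assumes "X \<subseteq># M6 i j k"
  shows "X = M6 (count X 1) (count X 2) (count X 5) \<and> count X 1 \<le> i \<and> count X 2 \<le> j \<and> count X 5 \<le> k"
proof -
  have c: "count X x \<le> count (M6 i j k) x" for x using assms by (simp add: subseteq_mset_def)
  have "X = M6 (count X 1) (count X 2) (count X 5)"
  proof (rule multiset_eqI)
    fix x show "count X x = count (M6 (count X 1) (count X 2) (count X 5)) x"
      using c[of x] by (auto simp: count_M6)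
  qed
  thus ?thesis using c[of 1] c[of 2] c[of 5] by (simp add: count_M6)
qed

lemma M6_le: "i' \<le> i \<Longrightarrow> j' \<le> j \<Longrightarrow> k' \<le> k \<Longrightarrow> M6 i' j' k' \<subseteq># M6 i j k"
  by (simp add: subseteq_mset_def count_M6)

definition atomP6 :: "nat \<Rightarrow> nat \<Rightarrow> nat \<Rightarrow> bool" where
  "atomP6 i j k \<longleftrightarrow> 0 < i + j + k \<and> 6 dvd (i + 2*j + 5*k) \<and>
     (\<forall>i'\<le>i. \<forall>j'\<le>j. \<forall>k'\<le>k. 0 < i' + j' + k' \<and> 6 dvd (i' + 2*j' + 5*k') \<longrightarrow> i' = i \<and> j' = j \<and> k' = k)"

lemma atom_M6: "atom (M6 i j k) \<longleftrightarrow> atomP6 i j k"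
proof
  assume a: "atom (M6 i j k)"
  have 1: "0 < i + j + k" using a by (auto simp: atom_def M6_empty)
  have 2: "6 dvd (i + 2*j + 5*k)" using a by (simp add: atom_def M6_zs)
  have 3: "i' = i \<and> j' = j \<and> k' = k" if h: "i' \<le> i" "j' \<le> j" "k' \<le> k" "0 < i' + j' + k'" "6 dvd (i' + 2*j' + 5*k')" for i' j' k'
  proof -
    have "M6 i' j' k' = M6 i j k"
      by (rule atom_sub[OF a M6_le[OF h(1-3)]]) (use h(4,5) in \<open>auto simp: M6_empty M6_zs\<close>)
    thus ?thesis by (simp add: M6_eq)
  qed
  show "atomP6 i j k" unfolding atomP6_def using 1 2 3 by blast
next
  assume p: "atomP6 i j k"
  show "atom (M6 i j k)"
  proof (rule atom_intro)
    show "M6 i j k \<noteq> {#}" "zero_sum (M6 i j k)" using p by (auto simp: atomP6_def M6_empty M6_zs)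
    fix X assume X: "X \<subseteq># M6 i j k" "X \<noteq> {#}" "zero_sum X"
    from M6_sub[OF X(1)] obtain i' j' k' where e: "X = M6 i' j' k'" "i' \<le> i" "j' \<le> j" "k' \<le> k" by blast
    have "0 < i' + j' + k'" "6 dvd (i' + 2*j' + 5*k')" using X(2,3) e(1) by (auto simp: M6_empty M6_zs)
    hence "i' = i \<and> j' = j \<and> k' = k" using p e(2-4) unfolding atomP6_def by blast
    thus "X = M6 i j k" using e(1) by simp
  qed
qed

lemma classify6:
  assumes "atomP6 i j k" "j \<le> 1"
  shows "(i,j,k) \<in> {(6,0,0),(0,0,6),(1,0,1),(4,1,0),(0,1,2)}"
proof -
  have d: "6 dvd (i + 2*j + 5*k)" and m: "\<And>i' j' k'. i'\<le>i \<Longrightarrow> j'\<le>j \<Longrightarrow> k'\<le>k \<Longrightarrow> 0 < i' + j' + k' \<Longrightarrow> 6 dvd (i' + 2*j' + 5*k') \<Longrightarrow> i' = i \<and> j' = j \<and> k' = k"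
    and p: "0 < i + j + k" using assms(1) unfolding atomP6_def by blast+
  consider "j = 0" | "j = 1" using assms(2) by linarith
  thus ?thesis
  proof cases
    case 1
    show ?thesis
    proof (cases "i \<ge> 1 \<and> k \<ge> 1")
      case True thus ?thesis using m[of 1 0 1] 1 by simp
    next
      case False
      hence "i = 0 \<or> k = 0" by linarith
      thus ?thesis
      proof
        assume "i = 0" hence "k \<ge> 6" using d p 1 by presburger
        thus ?thesis using m[of 0 0 6] 1 by simp
      next
        assume "k = 0" hence "i \<ge> 6" using d p 1 by presburger
        thus ?thesis using m[of 6 0 0] 1 by simp
      qed
    qed
  next
    case 2
    show ?thesis
    proof (cases "i \<ge> 1 \<and> k \<ge> 1")
      case True thus ?thesis using m[of 1 0 1] 2 by simp
    next
      case False
      hence "i = 0 \<or> k = 0" by linarith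
      thus ?thesis
      proof
        assume "i = 0" hence "k \<ge> 2" using d 2 by presburger
        thus ?thesis using m[of 0 1 2] 2 by simp
      next
        assume "k = 0" hence "i \<ge> 4" using d 2 by presburger
        thus ?thesis using m[of 4 1 0] 2 by simp
      qed
    qed
  qed
qed

lemma atomsP6: "atomP6 6 0 0" "atomP6 0 0 6" "atomP6 1 0 1" "atomP6 4 1 0" "atomP6 0 1 2"
  unfolding atomP6_def by presburger+

lemma sum_rep: "sum_mset (replicate_mset c (A::'b multiset)) = repeat_mset c A"
  by (induction c) auto

lemma in_sum_sub: "A \<in># F \<Longrightarrow> A \<subseteq># sum_mset F"
proof -
  assume "A \<in># F"
  then obtain G where "F = add_mset A G" by (blast dest: multi_member_split)
  thus ?thesis by simp
qed

lemma decomp6: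
  "(\<forall>A\<in>#F. A \<in> {M6 6 0 0, M6 0 0 6, M6 1 0 1, M6 4 1 0, M6 0 1 2}) \<Longrightarrow>
   \<exists>c1 c2 c3 c4 c5. sum_mset F = M6 (6*c1+c3+4*c4) (c4+c5) (6*c2+c3+2*c5) \<and> size F = c1+c2+c3+c4+c5"
proof (induction F)
  case empty
  show ?case by (rule exI[of _ 0])+ (simp add: M6_empty)
next
  case (add A F)
  then obtain c1 c2 c3 c4 c5 where c: "sum_mset F = M6 (6*c1+c3+4*c4) (c4+c5) (6*c2+c3+2*c5)" "size F = c1+c2+c3+c4+c5"
    by auto
  have "A \<in> {M6 6 0 0, M6 0 0 6, M6 1 0 1, M6 4 1 0, M6 0 1 2}" using add.prems by simp
  then consider "A = M6 6 0 0" | "A = M6 0 0 6" | "A = M6 1 0 1" | "A = M6 4 1 0" | "A = M6 0 1 2" by blast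
  thus ?case
  proof cases
    case 1 show ?thesis
      by (rule exI[of _ "Suc c1"], rule exI[of _ c2], rule exI[of _ c3], rule exI[of _ c4], rule exI[of _ c5])
         (simp add: 1 c M6_add M6_eq)
  next
    case 2 show ?thesis
      by (rule exI[of _ c1], rule exI[of _ "Suc c2"], rule exI[of _ c3], rule exI[of _ c4], rule exI[of _ c5])
         (simp add: 2 c M6_add M6_eq)
  next
    case 3 show ?thesis
      by (rule exI[of _ c1], rule exI[of _ c2], rule exI[of _ "Suc c3"], rule exI[of _ c4], rule exI[of _ c5])
         (simp add: 3 c M6_add M6_eq)
  next
    case 4 show ?thesis
      by (rule exI[of _ c1], rule exI[of _ c2], rule exI[of _ c3], rule exI[of _ "Suc c4"], rule exI[of _ c5])
         (simp add: 4 c M6_add M6_eq)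
  next
    case 5 show ?thesis
      by (rule exI[of _ c1], rule exI[of _ c2], rule exI[of _ c3], rule exI[of _ c4], rule exI[of _ "Suc c5"])
         (simp add: 5 c M6_add M6_eq)
  qed
qed

lemma lengths6:
  "lengths (M6 a 1 b) = {c1+c2+c3+c4+c5 | c1 c2 c3 c4 c5. a = 6*c1 + c3 + 4*c4 \<and> b = 6*c2 + c3 + 2*c5 \<and> 1 = c4 + c5}"
  (is "_ = ?R")
proof
  show "lengths (M6 a 1 b) \<subseteq> ?R"
  proof
    fix n assume "n \<in> lengths (M6 a 1 b)"
    then obtain F where F: "n = size F" "\<forall>A\<in>#F. atom A" "sum_mset F = M6 a 1 b"
      unfolding lengths_def by blast
    have "\<forall>A\<in>#F. A \<in> {M6 6 0 0, M6 0 0 6, M6 1 0 1, M6 4 1 0, M6 0 1 2}"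
    proof
      fix A assume A: "A \<in># F"
      have "A \<subseteq># M6 a 1 b" using in_sum_sub[OF A] F(3) by simp
      from M6_sub[OF this] obtain i j k where e: "A = M6 i j k" "j \<le> 1" by blast
      have "atomP6 i j k" using F(2) A e(1) atom_M6 by auto
      from classify6[OF this e(2)] show "A \<in> {M6 6 0 0, M6 0 0 6, M6 1 0 1, M6 4 1 0, M6 0 1 2}"
        using e(1) by auto
    qed
    from decomp6[OF this] obtain c1 c2 c3 c4 c5 where
      c: "sum_mset F = M6 (6*c1+c3+4*c4) (c4+c5) (6*c2+c3+2*c5)" "size F = c1+c2+c3+c4+c5" by blast
    from c(1) F(3) have "a = 6*c1 + c3 + 4*c4 \<and> b = 6*c2 + c3 + 2*c5 \<and> 1 = c4 + c5"
      by (simp add: M6_eq)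
    thus "n \<in> ?R" using F(1) c(2) by blast
  qed
next
  show "?R \<subseteq> lengths (M6 a 1 b)"
  proof
    fix n assume "n \<in> ?R"
    then obtain c1 c2 c3 c4 c5 where c: "n = c1+c2+c3+c4+c5" "a = 6*c1 + c3 + 4*c4" "b = 6*c2 + c3 + 2*c5" "1 = c4 + c5"
      by blast
    define F where "F = replicate_mset c1 (M6 6 0 0) + replicate_mset c2 (M6 0 0 6) + replicate_mset c3 (M6 1 0 1)
       + replicate_mset c4 (M6 4 1 0) + replicate_mset c5 (M6 0 1 2)"
    have "size F = n" using c(1) by (simp add: F_def)
    moreover have "\<forall>A\<in>#F. atom A" using atomsP6 by (auto simp: F_def atom_M6)
    moreover have "sum_mset F = M6 (6*c1 + c3 + 4*c4) (c4 + c5) (6*c2 + c3 + 2*c5)"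
      by (simp add: F_def sum_rep M6_repeat M6_add M6_eq)
    hence "sum_mset F = M6 a 1 b" using c(2-4) by (simp only: eq_commute[of a] eq_commute[of b] eq_commute[of 1])
    ultimately show "n \<in> lengths (M6 a 1 b)" unfolding lengths_def by blast
  qed
qed




section \<open>C2^5\<close>

lemma five_cases: "(j::5) = 0 \<or> j = 1 \<or> j = 2 \<or> j = 3 \<or> j = 4"
proof -
  have "card {0,1,2,3,4::5} = 5" by simp
  hence "{0,1,2,3,4::5} = UNIV" by (intro card_subset_eq) auto
  thus ?thesis by blast
qed

definition E :: "5 \<Rightarrow> 5 \<Rightarrow> 2" where "E i = (\<lambda>j. if j = i then 1 else 0)"
definition X0 :: "5 \<Rightarrow> 2" where "X0 = (\<lambda>j. 1)"
definition XH :: "5 \<Rightarrow> 2" where "XH = E 0 + E 1"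

lemma ex5: "\<exists>x::5. x \<noteq> a" "\<exists>x::5. x \<noteq> 0 \<and> (x \<noteq> 0 \<longrightarrow> x \<noteq> 1)"
  by (metis zero_neq_one) (rule exI[of _ 2], simp)

lemma distinct_elems:
  "E 0 \<noteq> E 1" "E 0 \<noteq> E 2" "E 0 \<noteq> E 3" "E 0 \<noteq> E 4" "E 0 \<noteq> X0" "E 0 \<noteq> XH"
  "E 1 \<noteq> E 2" "E 1 \<noteq> E 3" "E 1 \<noteq> E 4" "E 1 \<noteq> X0" "E 1 \<noteq> XH"
  "E 2 \<noteq> E 3" "E 2 \<noteq> E 4" "E 2 \<noteq> X0" "E 2 \<noteq> XH"
  "E 3 \<noteq> E 4" "E 3 \<noteq> X0" "E 3 \<noteq> XH"
  "E 4 \<noteq> X0" "E 4 \<noteq> XH"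
  "X0 \<noteq> XH"
  by (auto simp: E_def X0_def XH_def fun_eq_iff ex5)

lemmas dist2 = distinct_elems distinct_elems[THEN not_sym]

definition M2 :: "nat \<Rightarrow> nat \<Rightarrow> nat \<Rightarrow> nat \<Rightarrow> nat \<Rightarrow> nat \<Rightarrow> nat \<Rightarrow> (5 \<Rightarrow> 2) multiset" where
  "M2 a b c d e f g = replicate_mset a (E 0) + replicate_mset b (E 1) + replicate_mset c (E 2) +
     replicate_mset d (E 3) + replicate_mset e (E 4) + replicate_mset f X0 + replicate_mset g XH"

lemma count_M2: "count (M2 a b c d e f g) x = (if x = E 0 then a else if x = E 1 then b else if x = E 2 then c
   else if x = E 3 then d else if x = E 4 then e else if x = X0 then f else if x = XH then g else 0)"
  by (auto simp: M2_def dist2)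

lemma M2_eq: "M2 a b c d e f g = M2 a' b' c' d' e' f' g' \<longleftrightarrow>
   a = a' \<and> b = b' \<and> c = c' \<and> d = d' \<and> e = e' \<and> f = f' \<and> g = g'"
proof
  assume "M2 a b c d e f g = M2 a' b' c' d' e' f' g'"
  hence "count (M2 a b c d e f g) x = count (M2 a' b' c' d' e' f' g') x" for x by simp
  from this[of "E 0"] this[of "E 1"] this[of "E 2"] this[of "E 3"] this[of "E 4"] this[of X0] this[of XH]
  show "a = a' \<and> b = b' \<and> c = c' \<and> d = d' \<and> e = e' \<and> f = f' \<and> g = g'" by (simp_all add: count_M2 dist2)
qed simp

lemma M2_add: "M2 a b c d e f g + M2 a' b' c' d' e' f' g' = M2 (a+a') (b+b') (c+c') (d+d') (e+e') (f+f') (g+g')"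
  by (rule multiset_eqI) (simp add: count_M2)

lemma M2_repeat: "repeat_mset k (M2 a b c d e f g) = M2 (k*a) (k*b) (k*c) (k*d) (k*e) (k*f) (k*g)"
  by (rule multiset_eqI) (simp add: count_M2)

lemma M2_empty: "M2 a b c d e f g = {#} \<longleftrightarrow> a + b + c + d + e + f + g = 0"
  by (simp add: M2_def)

definition ZP2 :: "nat \<Rightarrow> nat \<Rightarrow> nat \<Rightarrow> nat \<Rightarrow> nat \<Rightarrow> nat \<Rightarrow> nat \<Rightarrow> bool" where
  "ZP2 a b c d e f g \<longleftrightarrow> even (a+f+g) \<and> even (b+f+g) \<and> even (c+f) \<and> even (d+f) \<and> even (e+f)"

lemma of_nat2: "(of_nat n :: 2) = 0 \<longleftrightarrow> even n" by (simp add: of_nat_eq_0_iff_char_dvd)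

lemma M2_zs: "zero_sum (M2 a b c d e f g) \<longleftrightarrow> ZP2 a b c d e f g"
proof -
  let ?s = "sum_mset (M2 a b c d e f g)"
  have p0: "?s 0 = of_nat (a+f+g)" by (simp add: M2_def E_def X0_def XH_def)
  have p1: "?s 1 = of_nat (b+f+g)" by (simp add: M2_def E_def X0_def XH_def)
  have p2: "?s 2 = of_nat (c+f)" by (simp add: M2_def E_def X0_def XH_def)
  have p3: "?s 3 = of_nat (d+f)" by (simp add: M2_def E_def X0_def XH_def)
  have p4: "?s 4 = of_nat (e+f)" by (simp add: M2_def E_def X0_def XH_def)
  have "?s = 0 \<longleftrightarrow> ?s 0 = 0 \<and> ?s 1 = 0 \<and> ?s 2 = 0 \<and> ?s 3 = 0 \<and> ?s 4 = 0"
  proof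
    assume h: "?s 0 = 0 \<and> ?s 1 = 0 \<and> ?s 2 = 0 \<and> ?s 3 = 0 \<and> ?s 4 = 0"
    show "?s = 0"
    proof
      fix j :: 5 show "?s j = 0 j" using five_cases[of j] h by auto
    qed
  qed simp
  thus ?thesis unfolding zero_sum_def ZP2_def p0 p1 p2 p3 p4 of_nat2 .
qed

lemma M2_sub:
  assumes "X \<subseteq># M2 a b c d e f g"
  shows "\<exists>a' b' c' d' e' f' g'. X = M2 a' b' c' d' e' f' g' \<and> a' \<le> a \<and> b' \<le> b \<and> c' \<le> c \<and> d' \<le> d \<and> e' \<le> e \<and> f' \<le> f \<and> g' \<le> g"
proof -
  have cnt: "count X x \<le> count (M2 a b c d e f g) x" for x using assms by (simp add: subseteq_mset_def)
  have "X = M2 (count X (E 0)) (count X (E 1)) (count X (E 2)) (count X (E 3)) (count X (E 4)) (count X X0) (count X XH)"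
  proof (rule multiset_eqI)
    fix x show "count X x = count (M2 (count X (E 0)) (count X (E 1)) (count X (E 2)) (count X (E 3)) (count X (E 4)) (count X X0) (count X XH)) x"
      using cnt[of x] by (auto simp: count_M2)
  qed
  moreover have "count X (E 0) \<le> a" "count X (E 1) \<le> b" "count X (E 2) \<le> c" "count X (E 3) \<le> d"
     "count X (E 4) \<le> e" "count X X0 \<le> f" "count X XH \<le> g"
    using cnt[of "E 0"] cnt[of "E 1"] cnt[of "E 2"] cnt[of "E 3"] cnt[of "E 4"] cnt[of X0] cnt[of XH]
    by (simp_all add: count_M2 dist2)
  ultimately show ?thesis by blast
qed

lemma M2_le: "a' \<le> a \<Longrightarrow> b' \<le> b \<Longrightarrow> c' \<le> c \<Longrightarrow> d' \<le> d \<Longrightarrow> e' \<le> e \<Longrightarrow> f' \<le> f \<Longrightarrow> g' \<le> g \<Longrightarrow>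
   M2 a' b' c' d' e' f' g' \<subseteq># M2 a b c d e f g"
  by (simp add: subseteq_mset_def count_M2)

definition atomP2 :: "nat \<Rightarrow> nat \<Rightarrow> nat \<Rightarrow> nat \<Rightarrow> nat \<Rightarrow> nat \<Rightarrow> nat \<Rightarrow> bool" where
  "atomP2 a b c d e f g \<longleftrightarrow> 0 < a+b+c+d+e+f+g \<and> ZP2 a b c d e f g \<and>
     (\<forall>a' b' c' d' e' f' g'. a' \<le> a \<and> b' \<le> b \<and> c' \<le> c \<and> d' \<le> d \<and> e' \<le> e \<and> f' \<le> f \<and> g' \<le> g \<and>
        0 < a'+b'+c'+d'+e'+f'+g' \<and> ZP2 a' b' c' d' e' f' g' \<longrightarrow>
        a' = a \<and> b' = b \<and> c' = c \<and> d' = d \<and> e' = e \<and> f' = f \<and> g' = g)"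

lemma atom_M2: "atom (M2 a b c d e f g) \<longleftrightarrow> atomP2 a b c d e f g"
proof
  assume at: "atom (M2 a b c d e f g)"
  have 1: "0 < a+b+c+d+e+f+g" using at by (auto simp: atom_def M2_empty)
  have 2: "ZP2 a b c d e f g" using at by (simp add: atom_def M2_zs)
  have 3: "a' = a \<and> b' = b \<and> c' = c \<and> d' = d \<and> e' = e \<and> f' = f \<and> g' = g"
    if h: "a' \<le> a \<and> b' \<le> b \<and> c' \<le> c \<and> d' \<le> d \<and> e' \<le> e \<and> f' \<le> f \<and> g' \<le> g \<and>
        0 < a'+b'+c'+d'+e'+f'+g' \<and> ZP2 a' b' c' d' e' f' g'" for a' b' c' d' e' f' g'
  proof -
    have "M2 a' b' c' d' e' f' g' = M2 a b c d e f g"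
      by (rule atom_sub[OF at M2_le]) (use h in \<open>auto simp: M2_empty M2_zs\<close>)
    thus ?thesis by (simp add: M2_eq)
  qed
  show "atomP2 a b c d e f g" unfolding atomP2_def using 1 2 3 by blast
next
  assume p: "atomP2 a b c d e f g"
  show "atom (M2 a b c d e f g)"
  proof (rule atom_intro)
    show "M2 a b c d e f g \<noteq> {#}" "zero_sum (M2 a b c d e f g)" using p by (auto simp: atomP2_def M2_empty M2_zs)
    fix X assume X: "X \<subseteq># M2 a b c d e f g" "X \<noteq> {#}" "zero_sum X"
    from M2_sub[OF X(1)] obtain a' b' c' d' e' f' g' where
      e: "X = M2 a' b' c' d' e' f' g'" "a' \<le> a \<and> b' \<le> b \<and> c' \<le> c \<and> d' \<le> d \<and> e' \<le> e \<and> f' \<le> f \<and> g' \<le> g" by blast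
    have "0 < a'+b'+c'+d'+e'+f'+g'" "ZP2 a' b' c' d' e' f' g'" using X(2,3) e(1) by (auto simp: M2_empty M2_zs)
    hence "a' = a \<and> b' = b \<and> c' = c \<and> d' = d \<and> e' = e \<and> f' = f \<and> g' = g" using p e(2) unfolding atomP2_def by blast
    thus "X = M2 a b c d e f g" using e(1) by simp
  qed
qed

lemma small2:
  assumes "a \<le> 1" "b \<le> 1" "c \<le> 1" "d \<le> 1" "e \<le> 1" "f \<le> 1" "g \<le> 1" "0 < a+b+c+d+e+f+g" "ZP2 a b c d e f g"
  shows "(a,b,c,d,e,f,g) \<in> {(1,1,1,1,1,1,0), (1,1,0,0,0,0,1), (0,0,1,1,1,1,1)}"
proof -
  have "f = 0 \<or> f = 1" "g = 0 \<or> g = 1" using assms by linarith+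
  moreover have "a = 0 \<or> a = 1" "b = 0 \<or> b = 1" "c = 0 \<or> c = 1" "d = 0 \<or> d = 1" "e = 0 \<or> e = 1"
    using assms by linarith+
  ultimately show ?thesis using assms(8,9) unfolding ZP2_def by (elim disjE) simp_all
qed

abbreviation "ATS2 \<equiv> {(2,0,0,0,0,0,0), (0,2,0,0,0,0,0), (0,0,2,0,0,0,0), (0,0,0,2,0,0,0), (0,0,0,0,2,0,0),
   (0,0,0,0,0,2,0), (1,1,1,1,1,1,0), (1,1,0,0,0,0,1), (0,0,1,1,1,1,1::nat)}"

lemma classify2:
  assumes "atomP2 a b c d e f g" "g \<le> 1"
  shows "(a,b,c,d,e,f,g) \<in> ATS2"
proof -
  have p: "0 < a+b+c+d+e+f+g" "ZP2 a b c d e f g" and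
    m: "\<And>a' b' c' d' e' f' g'. a' \<le> a \<and> b' \<le> b \<and> c' \<le> c \<and> d' \<le> d \<and> e' \<le> e \<and> f' \<le> f \<and> g' \<le> g \<and>
        0 < a'+b'+c'+d'+e'+f'+g' \<and> ZP2 a' b' c' d' e' f' g' \<Longrightarrow>
        a' = a \<and> b' = b \<and> c' = c \<and> d' = d \<and> e' = e \<and> f' = f \<and> g' = g"
    using assms(1) unfolding atomP2_def by blast+
  show ?thesis
  proof (cases "a \<ge> 2")
    case True thus ?thesis using m[of 2 0 0 0 0 0 0] by (simp add: ZP2_def)
  next
    case a: False
    show ?thesis
    proof (cases "b \<ge> 2")
      case True thus ?thesis using m[of 0 2 0 0 0 0 0] by (simp add: ZP2_def)
    next
      case b: False
      show ?thesis
      proof (cases "c \<ge> 2")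
        case True thus ?thesis using m[of 0 0 2 0 0 0 0] by (simp add: ZP2_def)
      next
        case c: False
        show ?thesis
        proof (cases "d \<ge> 2")
          case True thus ?thesis using m[of 0 0 0 2 0 0 0] by (simp add: ZP2_def)
        next
          case d: False
          show ?thesis
          proof (cases "e \<ge> 2")
            case True thus ?thesis using m[of 0 0 0 0 2 0 0] by (simp add: ZP2_def)
          next
            case e: False
            show ?thesis
            proof (cases "f \<ge> 2")
              case True thus ?thesis using m[of 0 0 0 0 0 2 0] by (simp add: ZP2_def)
            next
              case f: False
              have "(a,b,c,d,e,f,g) \<in> {(1,1,1,1,1,1,0), (1,1,0,0,0,0,1), (0,0,1,1,1,1,1)}"
                by (rule small2) (use a b c d e f assms(2) p in auto)
              thus ?thesis by auto
            qed
          qed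
        qed
      qed
    qed
  qed
qed

lemma sq_atomP:
  assumes "a' \<le> 2" "0 < a'" "even (a'::nat)" shows "a' = 2"
  using assms by presburger

lemma atomsP2:
  "atomP2 2 0 0 0 0 0 0" "atomP2 0 2 0 0 0 0 0" "atomP2 0 0 2 0 0 0 0" "atomP2 0 0 0 2 0 0 0"
  "atomP2 0 0 0 0 2 0 0" "atomP2 0 0 0 0 0 2 0"
  by (auto simp: atomP2_def ZP2_def intro: sq_atomP)

lemma atomsP2'_aux:
  assumes "(a,b,c,d,e,f,g) \<in> {(1,1,1,1,1,1,0), (1,1,0,0,0,0,1), (0,0,1,1,1,1,1::nat)}"
  shows "atomP2 a b c d e f g"
proof -
  have 1: "0 < a+b+c+d+e+f+g" "ZP2 a b c d e f g" using assms by (auto simp: ZP2_def)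
  have 2: "a' = a \<and> b' = b \<and> c' = c \<and> d' = d \<and> e' = e \<and> f' = f \<and> g' = g"
    if h: "a' \<le> a \<and> b' \<le> b \<and> c' \<le> c \<and> d' \<le> d \<and> e' \<le> e \<and> f' \<le> f \<and> g' \<le> g \<and>
        0 < a'+b'+c'+d'+e'+f'+g' \<and> ZP2 a' b' c' d' e' f' g'" for a' b' c' d' e' f' g'
  proof -
    have "(a',b',c',d',e',f',g') \<in> {(1,1,1,1,1,1,0), (1,1,0,0,0,0,1), (0,0,1,1,1,1,1)}"
      by (rule small2) (use h assms in auto)
    thus ?thesis using h assms by auto
  qed
  show ?thesis unfolding atomP2_def using 1 2 by blast
qed

lemma atomsP2':
  "atomP2 1 1 1 1 1 1 0" "atomP2 1 1 0 0 0 0 1" "atomP2 0 0 1 1 1 1 1"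
  by (rule atomsP2'_aux, simp)+

lemma decomp2:
  "(\<forall>A\<in>#F. A \<in> {M2 2 0 0 0 0 0 0, M2 0 2 0 0 0 0 0, M2 0 0 2 0 0 0 0, M2 0 0 0 2 0 0 0, M2 0 0 0 0 2 0 0, M2 0 0 0 0 0 2 0, M2 1 1 1 1 1 1 0, M2 1 1 0 0 0 0 1, M2 0 0 1 1 1 1 1}) \<Longrightarrow>
   \<exists>s1 s2 s3 s4 s5 s6 u ha hb. sum_mset F = M2 (2*s1+u+ha) (2*s2+u+ha) (2*s3+u+hb) (2*s4+u+hb) (2*s5+u+hb) (2*s6+u+hb) (ha+hb) \<and> size F = s1+s2+s3+s4+s5+s6+u+ha+hb"
proof (induction F)
  case empty
  show ?case by (rule exI[of _ 0])+ (simp add: M2_empty)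
next
  case (add A F)
  have "\<forall>A\<in>#F. A \<in> {M2 2 0 0 0 0 0 0, M2 0 2 0 0 0 0 0, M2 0 0 2 0 0 0 0, M2 0 0 0 2 0 0 0, M2 0 0 0 0 2 0 0, M2 0 0 0 0 0 2 0, M2 1 1 1 1 1 1 0, M2 1 1 0 0 0 0 1, M2 0 0 1 1 1 1 1}"  using add.prems by simp
  from add.IH[OF this] obtain s1 s2 s3 s4 s5 s6 u ha hb where c: "sum_mset F = M2 (2*s1+u+ha) (2*s2+u+ha) (2*s3+u+hb) (2*s4+u+hb) (2*s5+u+hb) (2*s6+u+hb) (ha+hb)" "size F = s1+s2+s3+s4+s5+s6+u+ha+hb"
    by blast
  have "A \<in> {M2 2 0 0 0 0 0 0, M2 0 2 0 0 0 0 0, M2 0 0 2 0 0 0 0, M2 0 0 0 2 0 0 0, M2 0 0 0 0 2 0 0, M2 0 0 0 0 0 2 0, M2 1 1 1 1 1 1 0, M2 1 1 0 0 0 0 1, M2 0 0 1 1 1 1 1}" using add.prems by simp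
  then consider "A = M2 2 0 0 0 0 0 0" | "A = M2 0 2 0 0 0 0 0" | "A = M2 0 0 2 0 0 0 0" | "A = M2 0 0 0 2 0 0 0" | "A = M2 0 0 0 0 2 0 0" | "A = M2 0 0 0 0 0 2 0" | "A = M2 1 1 1 1 1 1 0" | "A = M2 1 1 0 0 0 0 1" | "A = M2 0 0 1 1 1 1 1" by blast
  thus ?case
  proof cases
    case 1 show ?thesis
      by (rule exI[of _ "Suc s1"], rule exI[of _ "s2"], rule exI[of _ "s3"], rule exI[of _ "s4"], rule exI[of _ "s5"], rule exI[of _ "s6"], rule exI[of _ "u"], rule exI[of _ "ha"], rule exI[of _ "hb"]) (simp add: 1 c M2_add M2_eq)
  next
    case 2 show ?thesis
      by (rule exI[of _ "s1"], rule exI[of _ "Suc s2"], rule exI[of _ "s3"], rule exI[of _ "s4"], rule exI[of _ "s5"], rule exI[of _ "s6"], rule exI[of _ "u"], rule exI[of _ "ha"], rule exI[of _ "hb"]) (simp add: 2 c M2_add M2_eq)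
  next
    case 3 show ?thesis
      by (rule exI[of _ "s1"], rule exI[of _ "s2"], rule exI[of _ "Suc s3"], rule exI[of _ "s4"], rule exI[of _ "s5"], rule exI[of _ "s6"], rule exI[of _ "u"], rule exI[of _ "ha"], rule exI[of _ "hb"]) (simp add: 3 c M2_add M2_eq)
  next
    case 4 show ?thesis
      by (rule exI[of _ "s1"], rule exI[of _ "s2"], rule exI[of _ "s3"], rule exI[of _ "Suc s4"], rule exI[of _ "s5"], rule exI[of _ "s6"], rule exI[of _ "u"], rule exI[of _ "ha"], rule exI[of _ "hb"]) (simp add: 4 c M2_add M2_eq)
  next
    case 5 show ?thesis
      by (rule exI[of _ "s1"], rule exI[of _ "s2"], rule exI[of _ "s3"], rule exI[of _ "s4"], rule exI[of _ "Suc s5"], rule exI[of _ "s6"], rule exI[of _ "u"], rule exI[of _ "ha"], rule exI[of _ "hb"]) (simp add: 5 c M2_add M2_eq)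
  next
    case 6 show ?thesis
      by (rule exI[of _ "s1"], rule exI[of _ "s2"], rule exI[of _ "s3"], rule exI[of _ "s4"], rule exI[of _ "s5"], rule exI[of _ "Suc s6"], rule exI[of _ "u"], rule exI[of _ "ha"], rule exI[of _ "hb"]) (simp add: 6 c M2_add M2_eq)
  next
    case 7 show ?thesis
      by (rule exI[of _ "s1"], rule exI[of _ "s2"], rule exI[of _ "s3"], rule exI[of _ "s4"], rule exI[of _ "s5"], rule exI[of _ "s6"], rule exI[of _ "Suc u"], rule exI[of _ "ha"], rule exI[of _ "hb"]) (simp add: 7 c M2_add M2_eq)
  next
    case 8 show ?thesis
      by (rule exI[of _ "s1"], rule exI[of _ "s2"], rule exI[of _ "s3"], rule exI[of _ "s4"], rule exI[of _ "s5"], rule exI[of _ "s6"], rule exI[of _ "u"], rule exI[of _ "Suc ha"], rule exI[of _ "hb"]) (simp add: 8 c M2_add M2_eq)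
  next
    case 9 show ?thesis
      by (rule exI[of _ "s1"], rule exI[of _ "s2"], rule exI[of _ "s3"], rule exI[of _ "s4"], rule exI[of _ "s5"], rule exI[of _ "s6"], rule exI[of _ "u"], rule exI[of _ "ha"], rule exI[of _ "Suc hb"]) (simp add: 9 c M2_add M2_eq)
  qed
qed

lemma lengths2:
  "lengths (M2 a b c d e f 1) = {s1+s2+s3+s4+s5+s6+u+ha+hb | s1 s2 s3 s4 s5 s6 u ha hb. a = 2*s1+u+ha \<and> b = 2*s2+u+ha \<and> c = 2*s3+u+hb \<and> d = 2*s4+u+hb \<and> e = 2*s5+u+hb \<and> f = 2*s6+u+hb \<and> 1 = ha+hb}"
  (is "_ = ?R")
proof
  show "lengths (M2 a b c d e f 1) \<subseteq> ?R"
  proof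
    fix n assume "n \<in> lengths (M2 a b c d e f 1)"
    then obtain F where F: "n = size F" "\<forall>A\<in>#F. atom A" "sum_mset F = M2 a b c d e f 1"
      unfolding lengths_def by blast
    have "\<forall>A\<in>#F. A \<in> {M2 2 0 0 0 0 0 0, M2 0 2 0 0 0 0 0, M2 0 0 2 0 0 0 0, M2 0 0 0 2 0 0 0, M2 0 0 0 0 2 0 0, M2 0 0 0 0 0 2 0, M2 1 1 1 1 1 1 0, M2 1 1 0 0 0 0 1, M2 0 0 1 1 1 1 1}"
    proof
      fix A assume A: "A \<in># F"
      have "A \<subseteq># M2 a b c d e f 1" using in_sum_sub[OF A] F(3) by simp
      from M2_sub[OF this] obtain a' b' c' d' e' f' g' where e: "A = M2 a' b' c' d' e' f' g'" "g' \<le> 1" by blast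
      have "atomP2 a' b' c' d' e' f' g'" using F(2) A e(1) atom_M2 by auto
      from classify2[OF this e(2)] show "A \<in> {M2 2 0 0 0 0 0 0, M2 0 2 0 0 0 0 0, M2 0 0 2 0 0 0 0, M2 0 0 0 2 0 0 0, M2 0 0 0 0 2 0 0, M2 0 0 0 0 0 2 0, M2 1 1 1 1 1 1 0, M2 1 1 0 0 0 0 1, M2 0 0 1 1 1 1 1}"
        using e(1) by auto
    qed
    from decomp2[OF this] obtain s1 s2 s3 s4 s5 s6 u ha hb where
      c: "sum_mset F = M2 (2*s1+u+ha) (2*s2+u+ha) (2*s3+u+hb) (2*s4+u+hb) (2*s5+u+hb) (2*s6+u+hb) (ha+hb)" "size F = s1+s2+s3+s4+s5+s6+u+ha+hb" by blast
    from c(1) F(3) have "a = 2*s1+u+ha \<and> b = 2*s2+u+ha \<and> c = 2*s3+u+hb \<and> d = 2*s4+u+hb \<and> e = 2*s5+u+hb \<and> f = 2*s6+u+hb \<and> 1 = ha+hb"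
      by (simp add: M2_eq)
    thus "n \<in> ?R" using F(1) c(2) by blast
  qed
next
  show "?R \<subseteq> lengths (M2 a b c d e f 1)"
  proof
    fix n assume "n \<in> ?R"
    then obtain s1 s2 s3 s4 s5 s6 u ha hb where c: "n = s1+s2+s3+s4+s5+s6+u+ha+hb" "a = 2*s1+u+ha \<and> b = 2*s2+u+ha \<and> c = 2*s3+u+hb \<and> d = 2*s4+u+hb \<and> e = 2*s5+u+hb \<and> f = 2*s6+u+hb \<and> 1 = ha+hb"
      by blast
    define F where "F = replicate_mset s1 (M2 2 0 0 0 0 0 0)+ replicate_mset s2 (M2 0 2 0 0 0 0 0)+ replicate_mset s3 (M2 0 0 2 0 0 0 0)+ replicate_mset s4 (M2 0 0 0 2 0 0 0)+ replicate_mset s5 (M2 0 0 0 0 2 0 0)+ replicate_mset s6 (M2 0 0 0 0 0 2 0)+ replicate_mset u (M2 1 1 1 1 1 1 0)+ replicate_mset ha (M2 1 1 0 0 0 0 1)+ replicate_mset hb (M2 0 0 1 1 1 1 1)"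
    have "size F = n" using c(1) by (simp add: F_def)
    moreover have "\<forall>A\<in>#F. atom A" using atomsP2 atomsP2' by (auto simp: F_def atom_M2)
    moreover have "sum_mset F = M2 (2*s1+u+ha) (2*s2+u+ha) (2*s3+u+hb) (2*s4+u+hb) (2*s5+u+hb) (2*s6+u+hb) (ha+hb)"
      by (simp add: F_def sum_rep M2_repeat M2_add M2_eq)
    hence "sum_mset F = M2 a b c d e f 1" using c(2) by (elim conjE) (simp only: eq_commute[of a] eq_commute[of b]
       eq_commute[of c] eq_commute[of d] eq_commute[of e] eq_commute[of f] eq_commute[of 1])
    ultimately show "n \<in> lengths (M2 a b c d e f 1)" unfolding lengths_def by blast
  qed
qed


lemma inst6_0: "{(c1::nat)+c2+c3+c4+c5 | c1 c2 c3 c4 c5. 6 = 6*c1 + c3 + 4*c4 \<and> 8 = 6*c2 + c3 + 2*c5 \<and> 1 = c4 + c5} = {3,4,7}" (is "?R = ?S")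
proof (rule equalityI)
  show "?R \<subseteq> ?S"
  proof (rule subsetI)
  fix n assume "n \<in> ?R"
  then obtain c1 c2 c3 c4 c5 where n: "n = c1+c2+c3+c4+c5" and e: "6 = 6*c1 + c3 + 4*c4 \<and> 8 = 6*c2 + c3 + 2*c5 \<and> 1 = c4 + c5"
    by blast
  have "c1 = 0 \<or> c1 = 1" "c2 = 0 \<or> c2 = 1" "c4 = 0 \<or> c4 = 1" using e by linarith+
  thus "n \<in> ?S" using e n by (elim disjE) auto
  qed
next
  have h3: "3 \<in> ?R" by (rule CollectI, rule exI[of _ "1::nat"], rule exI[of _ "1::nat"], rule exI[of _ "0::nat"], rule exI[of _ "0::nat"], rule exI[of _ "1::nat"]) simp
  have h4: "4 \<in> ?R" by (rule CollectI, rule exI[of _ "0::nat"], rule exI[of _ "1::nat"], rule exI[of _ "2::nat"], rule exI[of _ "1::nat"], rule exI[of _ "0::nat"]) simp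
  have h7: "7 \<in> ?R" by (rule CollectI, rule exI[of _ "0::nat"], rule exI[of _ "0::nat"], rule exI[of _ "6::nat"], rule exI[of _ "0::nat"], rule exI[of _ "1::nat"]) simp
  show "?S \<subseteq> ?R" unfolding insert_subset using h3 h4 h7 by (intro conjI empty_subsetI)
qed

lemma sys6_0: "{3,4,7} \<in> system_of_lengths TYPE(6)"
  unfolding system_of_lengths_def
proof (rule CollectI, rule exI[of _ "M6 6 1 8"], rule conjI)
  show "{3,4,7} = lengths (M6 6 1 8)" unfolding lengths6 by (rule inst6_0[symmetric])
  show "zero_sum (M6 6 1 8)" unfolding M6_zs by simp
qed

lemma inst6_1: "{(c1::nat)+c2+c3+c4+c5 | c1 c2 c3 c4 c5. 10 = 6*c1 + c3 + 4*c4 \<and> 6 = 6*c2 + c3 + 2*c5 \<and> 1 = c4 + c5} = {3,6,7}" (is "?R = ?S")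
proof (rule equalityI)
  show "?R \<subseteq> ?S"
  proof (rule subsetI)
  fix n assume "n \<in> ?R"
  then obtain c1 c2 c3 c4 c5 where n: "n = c1+c2+c3+c4+c5" and e: "10 = 6*c1 + c3 + 4*c4 \<and> 6 = 6*c2 + c3 + 2*c5 \<and> 1 = c4 + c5"
    by blast
  have "c1 = 0 \<or> c1 = 1" "c2 = 0 \<or> c2 = 1" "c4 = 0 \<or> c4 = 1" using e by linarith+
  thus "n \<in> ?S" using e n by (elim disjE) auto
  qed
next
  have h3: "3 \<in> ?R" by (rule CollectI, rule exI[of _ "1::nat"], rule exI[of _ "1::nat"], rule exI[of _ "0::nat"], rule exI[of _ "1::nat"], rule exI[of _ "0::nat"]) simp
  have h6: "6 \<in> ?R" by (rule CollectI, rule exI[of _ "1::nat"], rule exI[of _ "0::nat"], rule exI[of _ "4::nat"], rule exI[of _ "0::nat"], rule exI[of _ "1::nat"]) simp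
  have h7: "7 \<in> ?R" by (rule CollectI, rule exI[of _ "0::nat"], rule exI[of _ "0::nat"], rule exI[of _ "6::nat"], rule exI[of _ "1::nat"], rule exI[of _ "0::nat"]) simp
  show "?S \<subseteq> ?R" unfolding insert_subset using h3 h6 h7 by (intro conjI empty_subsetI)
qed

lemma sys6_1: "{3,6,7} \<in> system_of_lengths TYPE(6)"
  unfolding system_of_lengths_def
proof (rule CollectI, rule exI[of _ "M6 10 1 6"], rule conjI)
  show "{3,6,7} = lengths (M6 10 1 6)" unfolding lengths6 by (rule inst6_1[symmetric])
  show "zero_sum (M6 10 1 6)" unfolding M6_zs by simp
qed

lemma inst6_2: "{(c1::nat)+c2+c3+c4+c5 | c1 c2 c3 c4 c5. 12 = 6*c1 + c3 + 4*c4 \<and> 8 = 6*c2 + c3 + 2*c5 \<and> 1 = c4 + c5} = {4,5,8,9}" (is "?R = ?S")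
proof (rule equalityI)
  show "?R \<subseteq> ?S"
  proof (rule subsetI)
  fix n assume "n \<in> ?R"
  then obtain c1 c2 c3 c4 c5 where n: "n = c1+c2+c3+c4+c5" and e: "12 = 6*c1 + c3 + 4*c4 \<and> 8 = 6*c2 + c3 + 2*c5 \<and> 1 = c4 + c5"
    by blast
  have "c1 = 0 \<or> c1 = 1 \<or> c1 = 2" "c2 = 0 \<or> c2 = 1" "c4 = 0 \<or> c4 = 1" using e by linarith+
  thus "n \<in> ?S" using e n by (elim disjE) auto
  qed
next
  have h4: "4 \<in> ?R" by (rule CollectI, rule exI[of _ "2::nat"], rule exI[of _ "1::nat"], rule exI[of _ "0::nat"], rule exI[of _ "0::nat"], rule exI[of _ "1::nat"]) simp
  have h5: "5 \<in> ?R" by (rule CollectI, rule exI[of _ "1::nat"], rule exI[of _ "1::nat"], rule exI[of _ "2::nat"], rule exI[of _ "1::nat"], rule exI[of _ "0::nat"]) simp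
  have h8: "8 \<in> ?R" by (rule CollectI, rule exI[of _ "1::nat"], rule exI[of _ "0::nat"], rule exI[of _ "6::nat"], rule exI[of _ "0::nat"], rule exI[of _ "1::nat"]) simp
  have h9: "9 \<in> ?R" by (rule CollectI, rule exI[of _ "0::nat"], rule exI[of _ "0::nat"], rule exI[of _ "8::nat"], rule exI[of _ "1::nat"], rule exI[of _ "0::nat"]) simp
  show "?S \<subseteq> ?R" unfolding insert_subset using h4 h5 h8 h9 by (intro conjI empty_subsetI)
qed

lemma sys6_2: "{4,5,8,9} \<in> system_of_lengths TYPE(6)"
  unfolding system_of_lengths_def
proof (rule CollectI, rule exI[of _ "M6 12 1 8"], rule conjI)
  show "{4,5,8,9} = lengths (M6 12 1 8)" unfolding lengths6 by (rule inst6_2[symmetric])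
  show "zero_sum (M6 12 1 8)" unfolding M6_zs by simp
qed

lemma inst6_3: "{(c1::nat)+c2+c3+c4+c5 | c1 c2 c3 c4 c5. 10 = 6*c1 + c3 + 4*c4 \<and> 12 = 6*c2 + c3 + 2*c5 \<and> 1 = c4 + c5} = {4,7,8,11}" (is "?R = ?S")
proof (rule equalityI)
  show "?R \<subseteq> ?S"
  proof (rule subsetI)
  fix n assume "n \<in> ?R"
  then obtain c1 c2 c3 c4 c5 where n: "n = c1+c2+c3+c4+c5" and e: "10 = 6*c1 + c3 + 4*c4 \<and> 12 = 6*c2 + c3 + 2*c5 \<and> 1 = c4 + c5"
    by blast
  have "c1 = 0 \<or> c1 = 1" "c2 = 0 \<or> c2 = 1 \<or> c2 = 2" "c4 = 0 \<or> c4 = 1" using e by linarith+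
  thus "n \<in> ?S" using e n by (elim disjE) auto
  qed
next
  have h4: "4 \<in> ?R" by (rule CollectI, rule exI[of _ "1::nat"], rule exI[of _ "2::nat"], rule exI[of _ "0::nat"], rule exI[of _ "1::nat"], rule exI[of _ "0::nat"]) simp
  have h7: "7 \<in> ?R" by (rule CollectI, rule exI[of _ "1::nat"], rule exI[of _ "1::nat"], rule exI[of _ "4::nat"], rule exI[of _ "0::nat"], rule exI[of _ "1::nat"]) simp
  have h8: "8 \<in> ?R" by (rule CollectI, rule exI[of _ "0::nat"], rule exI[of _ "1::nat"], rule exI[of _ "6::nat"], rule exI[of _ "1::nat"], rule exI[of _ "0::nat"]) simp
  have h11: "11 \<in> ?R" by (rule CollectI, rule exI[of _ "0::nat"], rule exI[of _ "0::nat"], rule exI[of _ "10::nat"], rule exI[of _ "0::nat"], rule exI[of _ "1::nat"]) simp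
  show "?S \<subseteq> ?R" unfolding insert_subset using h4 h7 h8 h11 by (intro conjI empty_subsetI)
qed

lemma sys6_3: "{4,7,8,11} \<in> system_of_lengths TYPE(6)"
  unfolding system_of_lengths_def
proof (rule CollectI, rule exI[of _ "M6 10 1 12"], rule conjI)
  show "{4,7,8,11} = lengths (M6 10 1 12)" unfolding lengths6 by (rule inst6_3[symmetric])
  show "zero_sum (M6 10 1 12)" unfolding M6_zs by simp
qed

lemma inst6_4: "{(c1::nat)+c2+c3+c4+c5 | c1 c2 c3 c4 c5. 16 = 6*c1 + c3 + 4*c4 \<and> 12 = 6*c2 + c3 + 2*c5 \<and> 1 = c4 + c5} = {5,8,9,12,13}" (is "?R = ?S")
proof (rule equalityI)
  show "?R \<subseteq> ?S"
  proof (rule subsetI)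
  fix n assume "n \<in> ?R"
  then obtain c1 c2 c3 c4 c5 where n: "n = c1+c2+c3+c4+c5" and e: "16 = 6*c1 + c3 + 4*c4 \<and> 12 = 6*c2 + c3 + 2*c5 \<and> 1 = c4 + c5"
    by blast
  have "c1 = 0 \<or> c1 = 1 \<or> c1 = 2" "c2 = 0 \<or> c2 = 1 \<or> c2 = 2" "c4 = 0 \<or> c4 = 1" using e by linarith+
  thus "n \<in> ?S" using e n by (elim disjE) auto
  qed
next
  have h5: "5 \<in> ?R" by (rule CollectI, rule exI[of _ "2::nat"], rule exI[of _ "2::nat"], rule exI[of _ "0::nat"], rule exI[of _ "1::nat"], rule exI[of _ "0::nat"]) simp
  have h8: "8 \<in> ?R" by (rule CollectI, rule exI[of _ "2::nat"], rule exI[of _ "1::nat"], rule exI[of _ "4::nat"], rule exI[of _ "0::nat"], rule exI[of _ "1::nat"]) simp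
  have h9: "9 \<in> ?R" by (rule CollectI, rule exI[of _ "1::nat"], rule exI[of _ "1::nat"], rule exI[of _ "6::nat"], rule exI[of _ "1::nat"], rule exI[of _ "0::nat"]) simp
  have h12: "12 \<in> ?R" by (rule CollectI, rule exI[of _ "1::nat"], rule exI[of _ "0::nat"], rule exI[of _ "10::nat"], rule exI[of _ "0::nat"], rule exI[of _ "1::nat"]) simp
  have h13: "13 \<in> ?R" by (rule CollectI, rule exI[of _ "0::nat"], rule exI[of _ "0::nat"], rule exI[of _ "12::nat"], rule exI[of _ "1::nat"], rule exI[of _ "0::nat"]) simp
  show "?S \<subseteq> ?R" unfolding insert_subset using h5 h8 h9 h12 h13 by (intro conjI empty_subsetI)
qed

lemma sys6_4: "{5,8,9,12,13} \<in> system_of_lengths TYPE(6)"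
  unfolding system_of_lengths_def
proof (rule CollectI, rule exI[of _ "M6 16 1 12"], rule conjI)
  show "{5,8,9,12,13} = lengths (M6 16 1 12)" unfolding lengths6 by (rule inst6_4[symmetric])
  show "zero_sum (M6 16 1 12)" unfolding M6_zs by simp
qed

lemma two_odd: "(2::nat) * x \<noteq> 1" "(2::nat) * x \<noteq> 3" "(2::nat) * x \<noteq> 5" "(2::nat) * x \<noteq> 7"
  by presburger+

lemma inst2_0: "{(s1::nat)+s2+s3+s4+s5+s6+u+ha+hb | s1 s2 s3 s4 s5 s6 u ha hb. 3 = 2*s1+u+ha \<and> 3 = 2*s2+u+ha \<and> 2 = 2*s3+u+hb \<and> 2 = 2*s4+u+hb \<and> 2 = 2*s5+u+hb \<and> 2 = 2*s6+u+hb \<and> 1 = ha+hb} = {3,4,7}" (is "?R = ?S")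
proof (rule equalityI)
  show "?R \<subseteq> ?S"
  proof (rule subsetI)
  fix n assume "n \<in> ?R"
  then obtain s1 s2 s3 s4 s5 s6 u ha hb where n: "n = s1+s2+s3+s4+s5+s6+u+ha+hb" and e: "3 = 2*s1+u+ha \<and> 3 = 2*s2+u+ha \<and> 2 = 2*s3+u+hb \<and> 2 = 2*s4+u+hb \<and> 2 = 2*s5+u+hb \<and> 2 = 2*s6+u+hb \<and> 1 = ha+hb"
    by blast
  have "ha = 0 \<or> ha = 1" "u = 0 \<or> u = 1 \<or> u = 2" using e by linarith+
  thus "n \<in> ?S" using e n by (elim disjE) (auto simp: two_odd)
  qed
next
  have h3: "3 \<in> ?R" by (rule CollectI, rule exI[of _ "0::nat"], rule exI[of _ "0::nat"], rule exI[of _ "0::nat"], rule exI[of _ "0::nat"], rule exI[of _ "0::nat"], rule exI[of _ "0::nat"], rule exI[of _ "2::nat"], rule exI[of _ "1::nat"], rule exI[of _ "0::nat"]) simp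
  have h4: "4 \<in> ?R" by (rule CollectI, rule exI[of _ "1::nat"], rule exI[of _ "1::nat"], rule exI[of _ "0::nat"], rule exI[of _ "0::nat"], rule exI[of _ "0::nat"], rule exI[of _ "0::nat"], rule exI[of _ "1::nat"], rule exI[of _ "0::nat"], rule exI[of _ "1::nat"]) simp
  have h7: "7 \<in> ?R" by (rule CollectI, rule exI[of _ "1::nat"], rule exI[of _ "1::nat"], rule exI[of _ "1::nat"], rule exI[of _ "1::nat"], rule exI[of _ "1::nat"], rule exI[of _ "1::nat"], rule exI[of _ "0::nat"], rule exI[of _ "1::nat"], rule exI[of _ "0::nat"]) simp
  show "?S \<subseteq> ?R" unfolding insert_subset using h3 h4 h7 by (intro conjI empty_subsetI)
qed

lemma sys2_0: "{3,4,7} \<in> system_of_lengths TYPE(5 \<Rightarrow> 2)"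
  unfolding system_of_lengths_def
proof (rule CollectI, rule exI[of _ "M2 3 3 2 2 2 2 1"], rule conjI)
  show "{3,4,7} = lengths (M2 3 3 2 2 2 2 1)" unfolding lengths2 by (rule inst2_0[symmetric])
  show "zero_sum (M2 3 3 2 2 2 2 1)" unfolding M2_zs ZP2_def by simp
qed

lemma inst2_1: "{(s1::nat)+s2+s3+s4+s5+s6+u+ha+hb | s1 s2 s3 s4 s5 s6 u ha hb. 2 = 2*s1+u+ha \<and> 2 = 2*s2+u+ha \<and> 3 = 2*s3+u+hb \<and> 3 = 2*s4+u+hb \<and> 3 = 2*s5+u+hb \<and> 3 = 2*s6+u+hb \<and> 1 = ha+hb} = {3,6,7}" (is "?R = ?S")
proof (rule equalityI)
  show "?R \<subseteq> ?S"
  proof (rule subsetI)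
  fix n assume "n \<in> ?R"
  then obtain s1 s2 s3 s4 s5 s6 u ha hb where n: "n = s1+s2+s3+s4+s5+s6+u+ha+hb" and e: "2 = 2*s1+u+ha \<and> 2 = 2*s2+u+ha \<and> 3 = 2*s3+u+hb \<and> 3 = 2*s4+u+hb \<and> 3 = 2*s5+u+hb \<and> 3 = 2*s6+u+hb \<and> 1 = ha+hb"
    by blast
  have "ha = 0 \<or> ha = 1" "u = 0 \<or> u = 1 \<or> u = 2" using e by linarith+
  thus "n \<in> ?S" using e n by (elim disjE) (auto simp: two_odd)
  qed
next
  have h3: "3 \<in> ?R" by (rule CollectI, rule exI[of _ "0::nat"], rule exI[of _ "0::nat"], rule exI[of _ "0::nat"], rule exI[of _ "0::nat"], rule exI[of _ "0::nat"], rule exI[of _ "0::nat"], rule exI[of _ "2::nat"], rule exI[of _ "0::nat"], rule exI[of _ "1::nat"]) simp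
  have h6: "6 \<in> ?R" by (rule CollectI, rule exI[of _ "0::nat"], rule exI[of _ "0::nat"], rule exI[of _ "1::nat"], rule exI[of _ "1::nat"], rule exI[of _ "1::nat"], rule exI[of _ "1::nat"], rule exI[of _ "1::nat"], rule exI[of _ "1::nat"], rule exI[of _ "0::nat"]) simp
  have h7: "7 \<in> ?R" by (rule CollectI, rule exI[of _ "1::nat"], rule exI[of _ "1::nat"], rule exI[of _ "1::nat"], rule exI[of _ "1::nat"], rule exI[of _ "1::nat"], rule exI[of _ "1::nat"], rule exI[of _ "0::nat"], rule exI[of _ "0::nat"], rule exI[of _ "1::nat"]) simp
  show "?S \<subseteq> ?R" unfolding insert_subset using h3 h6 h7 by (intro conjI empty_subsetI)
qed

lemma sys2_1: "{3,6,7} \<in> system_of_lengths TYPE(5 \<Rightarrow> 2)"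
  unfolding system_of_lengths_def
proof (rule CollectI, rule exI[of _ "M2 2 2 3 3 3 3 1"], rule conjI)
  show "{3,6,7} = lengths (M2 2 2 3 3 3 3 1)" unfolding lengths2 by (rule inst2_1[symmetric])
  show "zero_sum (M2 2 2 3 3 3 3 1)" unfolding M2_zs ZP2_def by simp
qed

lemma inst2_2: "{(s1::nat)+s2+s3+s4+s5+s6+u+ha+hb | s1 s2 s3 s4 s5 s6 u ha hb. 4 = 2*s1+u+ha \<and> 4 = 2*s2+u+ha \<and> 3 = 2*s3+u+hb \<and> 3 = 2*s4+u+hb \<and> 3 = 2*s5+u+hb \<and> 3 = 2*s6+u+hb \<and> 1 = ha+hb} = {4,5,8,9}" (is "?R = ?S")
proof (rule equalityI)
  show "?R \<subseteq> ?S"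
  proof (rule subsetI)
  fix n assume "n \<in> ?R"
  then obtain s1 s2 s3 s4 s5 s6 u ha hb where n: "n = s1+s2+s3+s4+s5+s6+u+ha+hb" and e: "4 = 2*s1+u+ha \<and> 4 = 2*s2+u+ha \<and> 3 = 2*s3+u+hb \<and> 3 = 2*s4+u+hb \<and> 3 = 2*s5+u+hb \<and> 3 = 2*s6+u+hb \<and> 1 = ha+hb"
    by blast
  have "ha = 0 \<or> ha = 1" "u = 0 \<or> u = 1 \<or> u = 2 \<or> u = 3" using e by linarith+
  thus "n \<in> ?S" using e n by (elim disjE) (auto simp: two_odd)
  qed
next
  have h4: "4 \<in> ?R" by (rule CollectI, rule exI[of _ "0::nat"], rule exI[of _ "0::nat"], rule exI[of _ "0::nat"], rule exI[of _ "0::nat"], rule exI[of _ "0::nat"], rule exI[of _ "0::nat"], rule exI[of _ "3::nat"], rule exI[of _ "1::nat"], rule exI[of _ "0::nat"]) simp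
  have h5: "5 \<in> ?R" by (rule CollectI, rule exI[of _ "1::nat"], rule exI[of _ "1::nat"], rule exI[of _ "0::nat"], rule exI[of _ "0::nat"], rule exI[of _ "0::nat"], rule exI[of _ "0::nat"], rule exI[of _ "2::nat"], rule exI[of _ "0::nat"], rule exI[of _ "1::nat"]) simp
  have h8: "8 \<in> ?R" by (rule CollectI, rule exI[of _ "1::nat"], rule exI[of _ "1::nat"], rule exI[of _ "1::nat"], rule exI[of _ "1::nat"], rule exI[of _ "1::nat"], rule exI[of _ "1::nat"], rule exI[of _ "1::nat"], rule exI[of _ "1::nat"], rule exI[of _ "0::nat"]) simp
  have h9: "9 \<in> ?R" by (rule CollectI, rule exI[of _ "2::nat"], rule exI[of _ "2::nat"], rule exI[of _ "1::nat"], rule exI[of _ "1::nat"], rule exI[of _ "1::nat"], rule exI[of _ "1::nat"], rule exI[of _ "0::nat"], rule exI[of _ "0::nat"], rule exI[of _ "1::nat"]) simp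
  show "?S \<subseteq> ?R" unfolding insert_subset using h4 h5 h8 h9 by (intro conjI empty_subsetI)
qed

lemma sys2_2: "{4,5,8,9} \<in> system_of_lengths TYPE(5 \<Rightarrow> 2)"
  unfolding system_of_lengths_def
proof (rule CollectI, rule exI[of _ "M2 4 4 3 3 3 3 1"], rule conjI)
  show "{4,5,8,9} = lengths (M2 4 4 3 3 3 3 1)" unfolding lengths2 by (rule inst2_2[symmetric])
  show "zero_sum (M2 4 4 3 3 3 3 1)" unfolding M2_zs ZP2_def by simp
qed

lemma inst2_3: "{(s1::nat)+s2+s3+s4+s5+s6+u+ha+hb | s1 s2 s3 s4 s5 s6 u ha hb. 3 = 2*s1+u+ha \<and> 3 = 2*s2+u+ha \<and> 4 = 2*s3+u+hb \<and> 4 = 2*s4+u+hb \<and> 4 = 2*s5+u+hb \<and> 4 = 2*s6+u+hb \<and> 1 = ha+hb} = {4,7,8,11}" (is "?R = ?S")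
proof (rule equalityI)
  show "?R \<subseteq> ?S"
  proof (rule subsetI)
  fix n assume "n \<in> ?R"
  then obtain s1 s2 s3 s4 s5 s6 u ha hb where n: "n = s1+s2+s3+s4+s5+s6+u+ha+hb" and e: "3 = 2*s1+u+ha \<and> 3 = 2*s2+u+ha \<and> 4 = 2*s3+u+hb \<and> 4 = 2*s4+u+hb \<and> 4 = 2*s5+u+hb \<and> 4 = 2*s6+u+hb \<and> 1 = ha+hb"
    by blast
  have "ha = 0 \<or> ha = 1" "u = 0 \<or> u = 1 \<or> u = 2 \<or> u = 3" using e by linarith+
  thus "n \<in> ?S" using e n by (elim disjE) (auto simp: two_odd)
  qed
next
  have h4: "4 \<in> ?R" by (rule CollectI, rule exI[of _ "0::nat"], rule exI[of _ "0::nat"], rule exI[of _ "0::nat"], rule exI[of _ "0::nat"], rule exI[of _ "0::nat"], rule exI[of _ "0::nat"], rule exI[of _ "3::nat"], rule exI[of _ "0::nat"], rule exI[of _ "1::nat"]) simp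
  have h7: "7 \<in> ?R" by (rule CollectI, rule exI[of _ "0::nat"], rule exI[of _ "0::nat"], rule exI[of _ "1::nat"], rule exI[of _ "1::nat"], rule exI[of _ "1::nat"], rule exI[of _ "1::nat"], rule exI[of _ "2::nat"], rule exI[of _ "1::nat"], rule exI[of _ "0::nat"]) simp
  have h8: "8 \<in> ?R" by (rule CollectI, rule exI[of _ "1::nat"], rule exI[of _ "1::nat"], rule exI[of _ "1::nat"], rule exI[of _ "1::nat"], rule exI[of _ "1::nat"], rule exI[of _ "1::nat"], rule exI[of _ "1::nat"], rule exI[of _ "0::nat"], rule exI[of _ "1::nat"]) simp
  have h11: "11 \<in> ?R" by (rule CollectI, rule exI[of _ "1::nat"], rule exI[of _ "1::nat"], rule exI[of _ "2::nat"], rule exI[of _ "2::nat"], rule exI[of _ "2::nat"], rule exI[of _ "2::nat"], rule exI[of _ "0::nat"], rule exI[of _ "1::nat"], rule exI[of _ "0::nat"]) simp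
  show "?S \<subseteq> ?R" unfolding insert_subset using h4 h7 h8 h11 by (intro conjI empty_subsetI)
qed

lemma sys2_3: "{4,7,8,11} \<in> system_of_lengths TYPE(5 \<Rightarrow> 2)"
  unfolding system_of_lengths_def
proof (rule CollectI, rule exI[of _ "M2 3 3 4 4 4 4 1"], rule conjI)
  show "{4,7,8,11} = lengths (M2 3 3 4 4 4 4 1)" unfolding lengths2 by (rule inst2_3[symmetric])
  show "zero_sum (M2 3 3 4 4 4 4 1)" unfolding M2_zs ZP2_def by simp
qed

lemma inst2_4: "{(s1::nat)+s2+s3+s4+s5+s6+u+ha+hb | s1 s2 s3 s4 s5 s6 u ha hb. 4 = 2*s1+u+ha \<and> 4 = 2*s2+u+ha \<and> 5 = 2*s3+u+hb \<and> 5 = 2*s4+u+hb \<and> 5 = 2*s5+u+hb \<and> 5 = 2*s6+u+hb \<and> 1 = ha+hb} = {5,8,9,12,13}" (is "?R = ?S")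
proof (rule equalityI)
  show "?R \<subseteq> ?S"
  proof (rule subsetI)
  fix n assume "n \<in> ?R"
  then obtain s1 s2 s3 s4 s5 s6 u ha hb where n: "n = s1+s2+s3+s4+s5+s6+u+ha+hb" and e: "4 = 2*s1+u+ha \<and> 4 = 2*s2+u+ha \<and> 5 = 2*s3+u+hb \<and> 5 = 2*s4+u+hb \<and> 5 = 2*s5+u+hb \<and> 5 = 2*s6+u+hb \<and> 1 = ha+hb"
    by blast
  have "ha = 0 \<or> ha = 1" "u = 0 \<or> u = 1 \<or> u = 2 \<or> u = 3 \<or> u = 4" using e by linarith+
  thus "n \<in> ?S" using e n by (elim disjE) (auto simp: two_odd)
  qed
next
  have h5: "5 \<in> ?R" by (rule CollectI, rule exI[of _ "0::nat"], rule exI[of _ "0::nat"], rule exI[of _ "0::nat"], rule exI[of _ "0::nat"], rule exI[of _ "0::nat"], rule exI[of _ "0::nat"], rule exI[of _ "4::nat"], rule exI[of _ "0::nat"], rule exI[of _ "1::nat"]) simp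
  have h8: "8 \<in> ?R" by (rule CollectI, rule exI[of _ "0::nat"], rule exI[of _ "0::nat"], rule exI[of _ "1::nat"], rule exI[of _ "1::nat"], rule exI[of _ "1::nat"], rule exI[of _ "1::nat"], rule exI[of _ "3::nat"], rule exI[of _ "1::nat"], rule exI[of _ "0::nat"]) simp
  have h9: "9 \<in> ?R" by (rule CollectI, rule exI[of _ "1::nat"], rule exI[of _ "1::nat"], rule exI[of _ "1::nat"], rule exI[of _ "1::nat"], rule exI[of _ "1::nat"], rule exI[of _ "1::nat"], rule exI[of _ "2::nat"], rule exI[of _ "0::nat"], rule exI[of _ "1::nat"]) simp
  have h12: "12 \<in> ?R" by (rule CollectI, rule exI[of _ "1::nat"], rule exI[of _ "1::nat"], rule exI[of _ "2::nat"], rule exI[of _ "2::nat"], rule exI[of _ "2::nat"], rule exI[of _ "2::nat"], rule exI[of _ "1::nat"], rule exI[of _ "1::nat"], rule exI[of _ "0::nat"]) simp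
  have h13: "13 \<in> ?R" by (rule CollectI, rule exI[of _ "2::nat"], rule exI[of _ "2::nat"], rule exI[of _ "2::nat"], rule exI[of _ "2::nat"], rule exI[of _ "2::nat"], rule exI[of _ "2::nat"], rule exI[of _ "0::nat"], rule exI[of _ "0::nat"], rule exI[of _ "1::nat"]) simp
  show "?S \<subseteq> ?R" unfolding insert_subset using h5 h8 h9 h12 h13 by (intro conjI empty_subsetI)
qed

lemma sys2_4: "{5,8,9,12,13} \<in> system_of_lengths TYPE(5 \<Rightarrow> 2)"
  unfolding system_of_lengths_def
proof (rule CollectI, rule exI[of _ "M2 4 4 5 5 5 5 1"], rule conjI)
  show "{5,8,9,12,13} = lengths (M2 4 4 5 5 5 5 1)" unfolding lengths2 by (rule inst2_4[symmetric])
  show "zero_sum (M2 4 4 5 5 5 5 1)" unfolding M2_zs ZP2_def by simp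
qed

theorem lemma3p4:
  shows "\<forall>S \<in> {{3,4,7}, {3,6,7}, {4,5,8,9}, {4,7,8,11}, {5,8,9,12,13}}.
           S \<in> system_of_lengths TYPE(6) \<and> S \<in> system_of_lengths TYPE(5 \<Rightarrow> 2)"
  unfolding Ball_def insert_iff empty_iff
  using sys6_0 sys6_1 sys6_2 sys6_3 sys6_4 sys2_0 sys2_1 sys2_2 sys2_3 sys2_4
  by blast

end
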